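(* Let $\mathcal H_\mathrm{S},\mathcal H_\mathrm{M},\mathcal H_\mathrm{R}$ be finite-dimensional Hilbert spaces, $\mathcal H_\mathrm{R}=\sum_r E_r|r\rangle\langle r|$ a reservoir Hamiltonian with orthonormal eigenbasis $\{|r\rangle\}$, $\beta>0$, $P_r=e^{-\beta E_r}/\sum_{s}e^{-\beta E_s}$ and $\rho^\mathrm{i}_\mathrm{R}=\sum_r P_r|r\rangle\langle r|$. Let $\rho^\mathrm{i}_\mathrm{SM}$ be a positive definite density operator on $\mathcal H_\mathrm{S}\otimes\mathcal H_\mathrm{M}$, $U_\mathrm{SR}$ a unitary on $\mathcal H_\mathrm{S}\otimes\mathcal H_\mathrm{R}$, $U=U_\mathrm{SR}\otimes 1_\mathrm{M}$, and $\rho^\mathrm{f}_\mathrm{SM}=\mathrm{Tr}_\mathrm{R}[U(\rho^\mathrm{i}_\mathrm{SM}\otimes\rho^\mathrm{i}_\mathrm{R})U^\dagger]$. Fix spectral decompositions $\rho^\mathrm{i}_\mathrm{SM}=\sum_n P_n|n\rangle\langle n|$ and $\rho^\mathrm{f}_\mathrm{SM}=\sum_{n'}\tilde P_{n'}|n'\rangle\langle n'|$ (orthonormal eigenbases). For a trajectory $\gamma=(n,r,n',r')$ define $P_\mathrm{F}[\gamma]=|\langle n',r'|U|n,r\rangle|^2P_nP_r$ and the stochastic conditional entropy production $\sigma_\mathrm{S|M}(\gamma)=-\ln\tilde P_{n'}+\ln P_n+\beta(E_{r'}-E_r)$. Then $$\langle e^{-\sigma_\mathrm{S|M}}\rangl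e:=\sum_{\gamma:\,P_\mathrm{F}[\gamma]>0}P_\mathrm{F}[\gamma]\,e^{-\sigma_\mathrm{S|M}(\gamma)}=1.$$
   Context: The trajectories correspond to a two-point projective measurement in the joint eigenbasis of the system–memory state (initial and final) and in the energy eigenbasis of the reservoir, with the memory not evolving. The convention $e^{-\infty}=0$ is used if $\tilde P_{n'}=0$. In the paper, $\sigma_\mathrm{S|M}$ is written as $\Delta s_\mathrm{S|M}+\beta q_\mathrm{R}$ with $\Delta s_\mathrm{S|M}=-\ln(\tilde P_{n'}/P_b)+\ln(P_n/P_b)$ ($P_b$ eigenvalues of $\rho^\mathrm{i}_\mathrm{M}$, which cancel) and $q_\mathrm{R}=E_{r'}-E_r$. *)

theory Defs
  imports Complex_Main
begin

text \<open>Finite-dimensional operators are represented by their matrices with respect to a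
fixed orthonormal basis, indexed by a finite type: an operator on a space with basis
indexed by 'a is a function 'a => 'a => complex; a vector is a function 'a => complex.
Composite systems are indexed by product types. The reservoir basis (type 'r) is taken
to be the energy eigenbasis of the reservoir Hamiltonian.\<close>

definition mmult :: "('a::finite \<Rightarrow> 'a \<Rightarrow> complex) \<Rightarrow> ('a \<Rightarrow> 'a \<Rightarrow> complex) \<Rightarrow> 'a \<Rightarrow> 'a \<Rightarrow> complex" where
  "mmult A B i j = (\<Sum>k\<in>UNIV. A i k * B k j)"

definition adjoint :: "('a \<Rightarrow> 'a \<Rightarrow> complex) \<Rightarrow> 'a \<Rightarrow> 'a \<Rightarrow> complex" where
  "adjoint A i j = cnj (A j i)"

definition idop :: "'a \<Rightarrow> 'a \<Rightarrow> complex" where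
  "idop i j = (if i = j then 1 else 0)"

definition unitary_op :: "('a::finite \<Rightarrow> 'a \<Rightarrow> complex) \<Rightarrow> bool" where
  "unitary_op U \<longleftrightarrow> mmult (adjoint U) U = idop \<and> mmult U (adjoint U) = idop"

definition hermitian_op :: "('a \<Rightarrow> 'a \<Rightarrow> complex) \<Rightarrow> bool" where
  "hermitian_op A \<longleftrightarrow> adjoint A = A"

definition qform :: "('a::finite \<Rightarrow> 'a \<Rightarrow> complex) \<Rightarrow> ('a \<Rightarrow> complex) \<Rightarrow> complex" where
  "qform A v = (\<Sum>i\<in>UNIV. \<Sum>j\<in>UNIV. cnj (v i) * A i j * v j)"

definition trace_op :: "('a::finite \<Rightarrow> 'a \<Rightarrow> complex) \<Rightarrow> complex" where
  "trace_op A = (\<Sum>i\<in>UNIV. A i i)"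

definition pos_def_density :: "('a::finite \<Rightarrow> 'a \<Rightarrow> complex) \<Rightarrow> bool" where
  "pos_def_density A \<longleftrightarrow> hermitian_op A \<and> (\<forall>v. v \<noteq> (\<lambda>_. 0) \<longrightarrow> Re (qform A v) > 0)
      \<and> trace_op A = 1"

text \<open>A family of dim-many orthonormal vectors (hence an orthonormal basis).\<close>
definition orthonormal_family :: "('a::finite \<Rightarrow> 'a \<Rightarrow> complex) \<Rightarrow> bool" where
  "orthonormal_family phi \<longleftrightarrow>
     (\<forall>n k. (\<Sum>i\<in>UNIV. cnj (phi n i) * phi k i) = (if n = k then 1 else 0))"

definition spectral_decomp :: "('a::finite \<Rightarrow> 'a \<Rightarrow> complex) \<Rightarrow> ('a \<Rightarrow> real) \<Rightarrow> ('a \<Rightarrow> 'a \<Rightarrow> complex) \<Rightarrow> bool" where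
  "spectral_decomp A P phi \<longleftrightarrow> orthonormal_family phi \<and>
     (\<forall>i j. A i j = (\<Sum>n\<in>UNIV. complex_of_real (P n) * phi n i * cnj (phi n j)))"

definition gibbs :: "real \<Rightarrow> ('r::finite \<Rightarrow> real) \<Rightarrow> 'r \<Rightarrow> real" where
  "gibbs \<beta> E r = exp (- \<beta> * E r) / (\<Sum>s\<in>UNIV. exp (- \<beta> * E s))"

definition thermal_state :: "real \<Rightarrow> ('r::finite \<Rightarrow> real) \<Rightarrow> 'r \<Rightarrow> 'r \<Rightarrow> complex" where
  "thermal_state \<beta> E r r' = (if r = r' then complex_of_real (gibbs \<beta> E r) else 0)"

definition kron :: "('a \<Rightarrow> 'a \<Rightarrow> complex) \<Rightarrow> ('b \<Rightarrow> 'b \<Rightarrow> complex) \<Rightarrow> ('a \<times> 'b) \<Rightarrow> ('a \<times> 'b) \<Rightarrow> complex" where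
  "kron A B x y = A (fst x) (fst y) * B (snd x) (snd y)"

definition tensor_vec :: "('a \<Rightarrow> complex) \<Rightarrow> ('b \<Rightarrow> complex) \<Rightarrow> ('a \<times> 'b) \<Rightarrow> complex" where
  "tensor_vec v w x = v (fst x) * w (snd x)"

definition basis_vec :: "'a \<Rightarrow> 'a \<Rightarrow> complex" where
  "basis_vec r r0 = (if r = r0 then 1 else 0)"

text \<open>U = U_SR \<otimes> 1_M, as an operator on (H_S \<otimes> H_M) \<otimes> H_R (tensor factors reordered).\<close>
definition lift_U :: "('s \<times> 'r \<Rightarrow> 's \<times> 'r \<Rightarrow> complex) \<Rightarrow> ('s \<times> 'm) \<times> 'r \<Rightarrow> ('s \<times> 'm) \<times> 'r \<Rightarrow> complex" where
  "lift_U USR x y = USR (fst (fst x), snd x) (fst (fst y), snd y)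
                    * (if snd (fst x) = snd (fst y) then 1 else 0)"

definition ptrace2 :: "('a \<times> 'b::finite \<Rightarrow> 'a \<times> 'b \<Rightarrow> complex) \<Rightarrow> 'a \<Rightarrow> 'a \<Rightarrow> complex" where
  "ptrace2 A a b = (\<Sum>r\<in>UNIV. A (a, r) (b, r))"

definition final_state :: "('s::finite \<times> 'r::finite \<Rightarrow> 's \<times> 'r \<Rightarrow> complex) \<Rightarrow> real \<Rightarrow> ('r \<Rightarrow> real)
    \<Rightarrow> ('s \<times> 'm::finite \<Rightarrow> 's \<times> 'm \<Rightarrow> complex) \<Rightarrow> 's \<times> 'm \<Rightarrow> 's \<times> 'm \<Rightarrow> complex" where
  "final_state USR \<beta> E rho =
     ptrace2 (mmult (mmult (lift_U USR) (kron rho (thermal_state \<beta> E))) (adjoint (lift_U USR)))"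

definition mat_elem :: "('a::finite \<Rightarrow> 'a \<Rightarrow> complex) \<Rightarrow> ('a \<Rightarrow> complex) \<Rightarrow> ('a \<Rightarrow> complex) \<Rightarrow> complex" where
  "mat_elem A v w = (\<Sum>x\<in>UNIV. \<Sum>y\<in>UNIV. cnj (v x) * A x y * w y)"

definition PF :: "('s::finite \<times> 'r::finite \<Rightarrow> 's \<times> 'r \<Rightarrow> complex) \<Rightarrow> real \<Rightarrow> ('r \<Rightarrow> real)
    \<Rightarrow> ('s \<times> 'm::finite \<Rightarrow> real) \<Rightarrow> ('s \<times> 'm \<Rightarrow> 's \<times> 'm \<Rightarrow> complex) \<Rightarrow> ('s \<times> 'm \<Rightarrow> 's \<times> 'm \<Rightarrow> complex)
    \<Rightarrow> ('s \<times> 'm) \<times> 'r \<times> ('s \<times> 'm) \<times> 'r \<Rightarrow> real" where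
  "PF USR \<beta> E Pn phi psi \<gamma> = (case \<gamma> of (n, r, n', r') \<Rightarrow>
      (cmod (mat_elem (lift_U USR) (tensor_vec (psi n') (basis_vec r')) (tensor_vec (phi n) (basis_vec r))))\<^sup>2
      * Pn n * gibbs \<beta> E r)"

definition sigma_SM :: "real \<Rightarrow> ('r \<Rightarrow> real) \<Rightarrow> ('a \<Rightarrow> real) \<Rightarrow> ('a \<Rightarrow> real) \<Rightarrow> 'a \<times> 'r \<times> 'a \<times> 'r \<Rightarrow> real" where
  "sigma_SM \<beta> E Pn Pt \<gamma> = (case \<gamma> of (n, r, n', r') \<Rightarrow>
      - ln (Pt n') + ln (Pn n) + \<beta> * (E r' - E r))"

text \<open>e^{-sigma}, with the convention e^{-\<infinity>} = 0 when the final eigenvalue vanishes.\<close>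
definition exp_neg_sigma :: "real \<Rightarrow> ('r \<Rightarrow> real) \<Rightarrow> ('a \<Rightarrow> real) \<Rightarrow> ('a \<Rightarrow> real) \<Rightarrow> 'a \<times> 'r \<times> 'a \<times> 'r \<Rightarrow> real" where
  "exp_neg_sigma \<beta> E Pn Pt \<gamma> = (case \<gamma> of (n, r, n', r') \<Rightarrow>
      if Pt n' = 0 then 0 else exp (- sigma_SM \<beta> E Pn Pt \<gamma>))"

end

theory Submission
  imports Defs "HOL-Analysis.Analysis"
begin

lemma mmult_left_right:
  fixes A B :: "'a::finite \<Rightarrow> 'a \<Rightarrow> complex"
  assumes "mmult A B = idop" shows "mmult B A = idop"
proof -
  let ?A = "(\<chi> i j. A i j) :: complex^'a^'a"
  let ?B = "(\<chi> i j. B i j) :: complex^'a^'a"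
  have "\<And>i j. (\<Sum>k\<in>UNIV. A i k * B k j) = (if i = j then 1 else 0)"
    using assms by (metis mmult_def idop_def)
  then have "?A ** ?B = mat 1"
    by (simp add: matrix_matrix_mult_def mat_def vec_eq_iff)
  then have "?B ** ?A = mat 1" by (simp add: matrix_left_right_inverse)
  then have "\<And>i j. (\<Sum>k\<in>UNIV. B i k * A k j) = (if i = j then 1 else 0)"
    by (simp add: matrix_matrix_mult_def mat_def vec_eq_iff)
  then show ?thesis by (simp add: mmult_def idop_def fun_eq_iff)
qed

lemma ortho_complete:
  fixes phi :: "'a::finite \<Rightarrow> 'a \<Rightarrow> complex"
  assumes "orthonormal_family phi"
  shows "(\<Sum>n\<in>UNIV. phi n i * cnj (phi n j)) = (if i = j then 1 else 0)"
proof -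
  define F where "F i n = phi n i" for i n
  have "mmult (Defs.adjoint F) F = idop"
    using assms by (simp add: mmult_def Defs.adjoint_def idop_def F_def fun_eq_iff orthonormal_family_def)
  then have "mmult F (Defs.adjoint F) = idop" by (rule mmult_left_right)
  then show ?thesis by (simp add: mmult_def Defs.adjoint_def idop_def F_def fun_eq_iff)
qed

lemma mult_if01: "(a::'b::comm_ring_1) * (if P then 1 else 0) = (if P then a else 0)"
  by simp

lemma mult_if01': "(if P then 1 else 0) * (a::'b::comm_ring_1) = (if P then a else 0)"
  by simp

lemma sum_swap3: "(\<Sum>n\<in>A. \<Sum>i\<in>B. \<Sum>j\<in>C. f n i j) = (\<Sum>i\<in>B. \<Sum>j\<in>C. \<Sum>n\<in>A. f n i j)"
proof -
  have "(\<Sum>n\<in>A. \<Sum>i\<in>B. \<Sum>j\<in>C. f n i j) = (\<Sum>i\<in>B. \<Sum>n\<in>A. \<Sum>j\<in>C. f n i j)"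
    by (rule sum.swap)
  also have "\<dots> = (\<Sum>i\<in>B. \<Sum>j\<in>C. \<Sum>n\<in>A. f n i j)"
    by (rule sum.cong[OF refl], rule sum.swap)
  finally show ?thesis .
qed

definition ip :: "('a::finite \<Rightarrow> complex) \<Rightarrow> ('a \<Rightarrow> complex) \<Rightarrow> complex" where
  "ip v w = (\<Sum>i\<in>UNIV. cnj (v i) * w i)"

lemma parseval:
  fixes phi :: "'a::finite \<Rightarrow> 'a \<Rightarrow> complex"
  assumes "orthonormal_family phi"
  shows "(\<Sum>n\<in>UNIV. (cmod (ip (phi n) v))\<^sup>2) = (\<Sum>i\<in>UNIV. (cmod (v i))\<^sup>2)"
proof -
  have "complex_of_real (\<Sum>n\<in>UNIV. (cmod (ip (phi n) v))\<^sup>2)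
      = (\<Sum>n\<in>UNIV. cnj (ip (phi n) v) * ip (phi n) v)"
    by (simp add: complex_norm_square mult.commute del: of_real_power)
  also have "\<dots> = (\<Sum>n\<in>UNIV. \<Sum>i\<in>UNIV. \<Sum>j\<in>UNIV. cnj (v i) * v j * (phi n i * cnj (phi n j)))"
    unfolding ip_def cnj_sum sum_product by (auto intro!: sum.cong simp: mult_ac)
  also have "\<dots> = (\<Sum>i\<in>UNIV. \<Sum>j\<in>UNIV. cnj (v i) * v j * (\<Sum>n\<in>UNIV. phi n i * cnj (phi n j)))"
    unfolding sum_distrib_left by (rule sum_swap3)
  also have "\<dots> = (\<Sum>i\<in>UNIV. v i * cnj (v i))"
    by (simp add: ortho_complete[OF assms] mult_if01 mult.commute)
  also have "\<dots> = complex_of_real (\<Sum>i\<in>UNIV. (cmod (v i))\<^sup>2)"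
    by (simp add: complex_norm_square del: of_real_power)
  finally show ?thesis by (simp only: of_real_eq_iff)
qed


definition mv :: "('a::finite \<Rightarrow> 'a \<Rightarrow> complex) \<Rightarrow> ('a \<Rightarrow> complex) \<Rightarrow> 'a \<Rightarrow> complex" where
  "mv A v i = (\<Sum>j\<in>UNIV. A i j * v j)"

lemma qform_ip: "qform A v = ip v (mv A v)"
  unfolding qform_def ip_def mv_def sum_distrib_left by (simp add: mult.assoc)

lemma mat_elem_ip: "mat_elem A v w = ip v (mv A w)"
  unfolding mat_elem_def ip_def mv_def sum_distrib_left by (simp add: mult.assoc)

lemma mv_mmult: "mv (mmult A B) v = mv A (mv B v)"
proof
  fix i
  show "mv (mmult A B) v i = mv A (mv B v) i"
    unfolding mv_def mmult_def sum_distrib_left sum_distrib_right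
    by (subst sum.swap) (simp add: mult.assoc)
qed

lemma ip_adj: "ip v (mv A w) = ip (mv (Defs.adjoint A) v) w"
  unfolding ip_def mv_def Defs.adjoint_def sum_distrib_left sum_distrib_right cnj_sum complex_cnj_mult complex_cnj_cnj
  by (subst sum.swap) (auto intro!: sum.cong simp: mult_ac)

lemma mv_id: "mv idop v = v"
  by (simp add: fun_eq_iff mv_def idop_def mult_if01')

lemma mmult_assoc: "mmult (mmult A B) C = mmult A (mmult B C)"
proof (rule ext, rule ext)
  fix i j
  show "mmult (mmult A B) C i j = mmult A (mmult B C) i j"
    unfolding mmult_def sum_distrib_left sum_distrib_right
    by (subst sum.swap) (simp add: mult.assoc)
qed

lemma trace_comm: "trace_op (mmult A B) = trace_op (mmult B A)"
  unfolding trace_op_def mmult_def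
  by (subst sum.swap) (simp add: mult.commute)

lemma mmult_id: "mmult idop A = A"
  by (simp add: fun_eq_iff mmult_def idop_def mult_if01')

lemma trace_conj:
  assumes "mmult (Defs.adjoint U) U = idop"
  shows "trace_op (mmult (mmult U K) (Defs.adjoint U)) = trace_op K"
  by (metis trace_comm mmult_assoc assms mmult_id)

lemma qform_conj:
  "qform (mmult (mmult U K) (Defs.adjoint U)) w = qform K (mv (Defs.adjoint U) w)"
  by (simp add: qform_ip mv_mmult ip_adj)

lemma norm_conj:
  assumes "mmult U (Defs.adjoint U) = idop"
  shows "ip (mv (Defs.adjoint U) w) (mv (Defs.adjoint U) w) = ip w w"
  by (metis ip_adj mv_mmult assms mv_id)

lemma ip_self: "ip v v = complex_of_real (\<Sum>i\<in>UNIV. (cmod (v i))\<^sup>2)"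
  by (simp add: ip_def complex_norm_square mult.commute del: of_real_power)


lemma mult_if0r: "(a::'b::comm_ring_1) * (if P then b else 0) = (if P then a * b else 0)"
  by simp
lemma mult_if0l: "(if P then b else 0) * (a::'b::comm_ring_1) = (if P then b * a else 0)"
  by simp

lemma cnj_if0: "cnj (if P then a else 0) = (if P then cnj a else 0)"
  by simp

lemma sum_if_const: "(\<Sum>x\<in>A. if P then f x else 0) = (if P then (\<Sum>x\<in>A. f x) else 0)"
  by simp

lemma sum_pair: "(\<Sum>x\<in>(UNIV::('a::finite \<times> 'b::finite) set). f x) = (\<Sum>a\<in>UNIV. \<Sum>b\<in>UNIV. f (a, b))"
  by (simp add: sum.cartesian_product UNIV_Times_UNIV[symmetric] del: UNIV_Times_UNIV)

lemma spec_eig: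
  assumes "spectral_decomp A P phi"
  shows "mv A (phi n) = (\<lambda>i. complex_of_real (P n) * phi n i)"
proof
  fix i
  have on: "\<And>m. (\<Sum>j\<in>UNIV. cnj (phi m j) * phi n j) = (if m = n then 1 else 0)"
    using assms by (simp add: spectral_decomp_def orthonormal_family_def)
  have "mv A (phi n) i = (\<Sum>j\<in>UNIV. (\<Sum>m\<in>UNIV. complex_of_real (P m) * phi m i * cnj (phi m j)) * phi n j)"
    using assms by (simp add: mv_def spectral_decomp_def)
  also have "\<dots> = (\<Sum>m\<in>UNIV. complex_of_real (P m) * phi m i * (\<Sum>j\<in>UNIV. cnj (phi m j) * phi n j))"
    unfolding sum_distrib_left sum_distrib_right by (subst sum.swap) (simp add: mult.assoc)
  also have "\<dots> = complex_of_real (P n) * phi n i"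
    by (simp add: on mult_if01)
  finally show "mv A (phi n) i = complex_of_real (P n) * phi n i" .
qed

lemma spec_qform:
  assumes "spectral_decomp A P phi"
  shows "qform A (phi n) = complex_of_real (P n)"
proof -
  have on: "(\<Sum>j\<in>UNIV. cnj (phi n j) * phi n j) = 1"
    using assms by (simp add: spectral_decomp_def orthonormal_family_def)
  show ?thesis
    unfolding qform_ip spec_eig[OF assms] ip_def
    using on by (simp add: mult.left_commute sum_distrib_left[symmetric])
qed

lemma spec_trace:
  assumes "spectral_decomp A P phi"
  shows "trace_op A = complex_of_real (\<Sum>n\<in>UNIV. P n)"
proof -
  have on: "\<And>m. (\<Sum>j\<in>UNIV. cnj (phi m j) * phi m j) = 1"
    using assms by (simp add: spectral_decomp_def orthonormal_family_def)
  have "trace_op A = (\<Sum>i\<in>UNIV. \<Sum>m\<in>UNIV. complex_of_real (P m) * (cnj (phi m i) * phi m i))"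
    using assms by (simp add: trace_op_def spectral_decomp_def mult_ac)
  also have "\<dots> = (\<Sum>m\<in>UNIV. complex_of_real (P m) * (\<Sum>i\<in>UNIV. cnj (phi m i) * phi m i))"
    unfolding sum_distrib_left by (rule sum.swap)
  also have "\<dots> = complex_of_real (\<Sum>n\<in>UNIV. P n)" by (simp add: on)
  finally show ?thesis .
qed

lemma ptrace_qform:
  "qform (ptrace2 M) v = (\<Sum>r\<in>UNIV. qform M (tensor_vec v (basis_vec r)))"
proof -
  have "qform (ptrace2 M) v = (\<Sum>a\<in>UNIV. \<Sum>b\<in>UNIV. \<Sum>r\<in>UNIV. cnj (v a) * M (a, r) (b, r) * v b)"
    unfolding qform_def ptrace2_def sum_distrib_left sum_distrib_right by simp
  also have "\<dots> = (\<Sum>r\<in>UNIV. \<Sum>a\<in>UNIV. \<Sum>b\<in>UNIV. cnj (v a) * M (a, r) (b, r) * v b)"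
    by (rule sum_swap3[symmetric])
  also have "\<dots> = (\<Sum>r\<in>UNIV. qform M (tensor_vec v (basis_vec r)))"
    unfolding qform_def sum_pair tensor_vec_def basis_vec_def
    by (simp add: cnj_if0 mult_if0r mult_if0l mult_if01 mult_if01' sum_if_const cong: if_cong)
  finally show ?thesis .
qed

lemma trace_ptrace: "trace_op (ptrace2 M) = trace_op M"
  by (simp add: trace_op_def ptrace2_def sum_pair)

lemma kron_qform:
  "qform (kron A (thermal_state \<beta> E)) z
     = (\<Sum>r\<in>UNIV. complex_of_real (gibbs \<beta> E r) * qform A (\<lambda>a. z (a, r)))"
proof -
  have "qform (kron A (thermal_state \<beta> E)) z
      = (\<Sum>a\<in>UNIV. \<Sum>r\<in>UNIV. \<Sum>b\<in>UNIV. complex_of_real (gibbs \<beta> E r) * (cnj (z (a, r)) * A a b * z (b, r)))"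
    unfolding qform_def sum_pair kron_def thermal_state_def
    by (simp add: mult_if0r mult_if0l sum_if_const cong: if_cong) (intro sum.cong refl, simp add: mult_ac)
  also have "\<dots> = (\<Sum>r\<in>UNIV. complex_of_real (gibbs \<beta> E r) * qform A (\<lambda>a. z (a, r)))"
    unfolding qform_def sum_distrib_left by (rule sum.swap)
  finally show ?thesis .
qed

lemma kron_trace:
  "trace_op (kron A (thermal_state \<beta> E)) = trace_op A * complex_of_real (\<Sum>r\<in>UNIV. gibbs \<beta> E r)"
  by (simp add: trace_op_def sum_pair kron_def thermal_state_def sum_product)

lemma gibbs_pos: "gibbs \<beta> E r > 0"
  unfolding gibbs_def by (intro divide_pos_pos exp_gt_zero sum_pos) auto

lemma gibbs_sum: "(\<Sum>r\<in>(UNIV::'r::finite set). gibbs \<beta> E r) = 1"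
proof -
  have "(\<Sum>s\<in>(UNIV::'r set). exp (- \<beta> * E s)) > 0" by (intro sum_pos) auto
  then show ?thesis unfolding gibbs_def by (simp add: sum_divide_distrib[symmetric])
qed


lemma lift_unitary1:
  fixes USR :: "'s::finite \<times> 'r::finite \<Rightarrow> 's \<times> 'r \<Rightarrow> complex"
  assumes "mmult (Defs.adjoint USR) USR = idop"
  shows "mmult (Defs.adjoint (lift_U USR :: ('s \<times> 'm::finite) \<times> 'r \<Rightarrow> _)) (lift_U USR) = idop"
proof (rule ext, rule ext)
  fix x y :: "('s \<times> 'm) \<times> 'r"
  obtain sx mx rx where x: "x = ((sx, mx), rx)" by (metis prod.collapse)
  obtain sy my ry where y: "y = ((sy, my), ry)" by (metis prod.collapse)
  have u: "(\<Sum>s\<in>UNIV. \<Sum>r\<in>UNIV. cnj (USR (s, r) (sx, rx)) * USR (s, r) (sy, ry)) = (if (sx, rx) = (sy, ry) then 1 else 0)"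
    using fun_cong[OF fun_cong[OF assms, of "(sx, rx)"], of "(sy, ry)"]
    by (simp add: mmult_def Defs.adjoint_def idop_def sum_pair)
  have "mmult (Defs.adjoint (lift_U USR)) (lift_U USR) x y
     = (\<Sum>s\<in>UNIV. \<Sum>m\<in>UNIV. \<Sum>r\<in>UNIV. (if m = mx then if m = my then cnj (USR (s, r) (sx, rx)) * USR (s, r) (sy, ry) else 0 else 0))"
    unfolding x y mmult_def Defs.adjoint_def lift_U_def sum_pair
    by (auto intro!: sum.cong)
  also have "\<dots> = (\<Sum>m\<in>UNIV. \<Sum>s\<in>UNIV. \<Sum>r\<in>UNIV. (if m = mx then if m = my then cnj (USR (s, r) (sx, rx)) * USR (s, r) (sy, ry) else 0 else 0))"
    by (rule sum.swap)
  also have "\<dots> = (\<Sum>m\<in>UNIV. if m = mx then if m = my then (\<Sum>s\<in>UNIV. \<Sum>r\<in>UNIV. cnj (USR (s, r) (sx, rx)) * USR (s, r) (sy, ry)) else 0 else 0)"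
    by (rule sum.cong[OF refl]) auto
  also have "\<dots> = (if mx = my then (\<Sum>s\<in>UNIV. \<Sum>r\<in>UNIV. cnj (USR (s, r) (sx, rx)) * USR (s, r) (sy, ry)) else 0)"
    by simp
  also have "\<dots> = idop x y"
    using u by (auto simp: x y idop_def)
  finally show "mmult (Defs.adjoint (lift_U USR)) (lift_U USR) x y = idop x y" .
qed

lemma lift_unitary2:
  fixes USR :: "'s::finite \<times> 'r::finite \<Rightarrow> 's \<times> 'r \<Rightarrow> complex"
  assumes "mmult USR (Defs.adjoint USR) = idop"
  shows "mmult (lift_U USR :: ('s \<times> 'm::finite) \<times> 'r \<Rightarrow> _) (Defs.adjoint (lift_U USR)) = idop"
proof (rule ext, rule ext)
  fix x y :: "('s \<times> 'm) \<times> 'r"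
  obtain sx mx rx where x: "x = ((sx, mx), rx)" by (metis prod.collapse)
  obtain sy my ry where y: "y = ((sy, my), ry)" by (metis prod.collapse)
  have u: "(\<Sum>s\<in>UNIV. \<Sum>r\<in>UNIV. USR (sx, rx) (s, r) * cnj (USR (sy, ry) (s, r))) = (if (sx, rx) = (sy, ry) then 1 else 0)"
    using fun_cong[OF fun_cong[OF assms, of "(sx, rx)"], of "(sy, ry)"]
    by (simp add: mmult_def Defs.adjoint_def idop_def sum_pair)
  have "mmult (lift_U USR) (Defs.adjoint (lift_U USR)) x y
     = (\<Sum>s\<in>UNIV. \<Sum>m\<in>UNIV. \<Sum>r\<in>UNIV. (if mx = m then if my = m then USR (sx, rx) (s, r) * cnj (USR (sy, ry) (s, r)) else 0 else 0))"
    unfolding x y mmult_def Defs.adjoint_def lift_U_def sum_pair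
    by (auto intro!: sum.cong)
  also have "\<dots> = (\<Sum>m\<in>UNIV. \<Sum>s\<in>UNIV. \<Sum>r\<in>UNIV. (if mx = m then if my = m then USR (sx, rx) (s, r) * cnj (USR (sy, ry) (s, r)) else 0 else 0))"
    by (rule sum.swap)
  also have "\<dots> = (\<Sum>m\<in>UNIV. if mx = m then if my = m then (\<Sum>s\<in>UNIV. \<Sum>r\<in>UNIV. USR (sx, rx) (s, r) * cnj (USR (sy, ry) (s, r))) else 0 else 0)"
    by (rule sum.cong[OF refl]) auto
  also have "\<dots> = (if mx = my then (\<Sum>s\<in>UNIV. \<Sum>r\<in>UNIV. USR (sx, rx) (s, r) * cnj (USR (sy, ry) (s, r))) else 0)"
    by simp
  also have "\<dots> = idop x y"
    using u by (auto simp: x y idop_def)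
  finally show "mmult (lift_U USR) (Defs.adjoint (lift_U USR)) x y = idop x y" .
qed


lemma exp_aux:
  fixes P Q b e0 e1 Z :: real
  assumes "P > 0" "Q > 0"
  shows "Q * (exp (- b * e0) / Z) * exp (- (- ln P + ln Q + b * (e1 - e0))) = P * (exp (- b * e1) / Z)"
proof -
  have "- (- ln P + ln Q + b * (e1 - e0)) = (ln P + (- b * e1)) - (ln Q + (- b * e0))"
    by (simp add: algebra_simps)
  then have "exp (- (- ln P + ln Q + b * (e1 - e0))) = (P * exp (- b * e1)) / (Q * exp (- b * e0))"
    using assms by (simp only: exp_add exp_diff exp_ln)
  then show ?thesis using assms by (simp add: field_simps)
qed

lemma ip_cnj: "ip v w = cnj (ip w v)"
  by (simp add: ip_def mult.commute)

lemma sum_quad: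
  "(\<Sum>\<gamma>\<in>(UNIV::('a::finite \<times> 'b::finite \<times> 'a \<times> 'b) set). f \<gamma>)
     = (\<Sum>p\<in>UNIV. \<Sum>q\<in>UNIV. f (fst q, snd q, fst p, snd p))"
proof -
  have "(\<Sum>p\<in>(UNIV::('a \<times> 'b) set). \<Sum>q\<in>UNIV. f (fst q, snd q, fst p, snd p))
     = (\<Sum>q\<in>UNIV. \<Sum>p\<in>UNIV. f (fst q, snd q, fst p, snd p))"
    by (rule sum.swap)
  then show ?thesis by (simp add: sum_pair)
qed

lemma ip_tensor:
  "ip (tensor_vec v (basis_vec r)) z = ip v (\<lambda>a. z (a, r))"
  unfolding ip_def sum_pair tensor_vec_def basis_vec_def
  by (simp add: cnj_if0 mult_if0r mult_if0l mult_if01 mult_if01' cong: if_cong)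

lemma parseval_pair:
  fixes phi :: "'a::finite \<Rightarrow> 'a \<Rightarrow> complex" and z :: "'a \<times> 'r::finite \<Rightarrow> complex"
  assumes "orthonormal_family phi"
  shows "(\<Sum>q\<in>UNIV. (cmod (ip (tensor_vec (phi (fst q)) (basis_vec (snd q))) z))\<^sup>2)
         = (\<Sum>x\<in>UNIV. (cmod (z x))\<^sup>2)"
proof -
  have "(\<Sum>q\<in>UNIV. (cmod (ip (tensor_vec (phi (fst q)) (basis_vec (snd q))) z))\<^sup>2)
      = (\<Sum>n\<in>UNIV. \<Sum>r\<in>UNIV. (cmod (ip (phi n) (\<lambda>a. z (a, r))))\<^sup>2)"
    by (simp add: sum_pair ip_tensor)
  also have "\<dots> = (\<Sum>r\<in>UNIV. \<Sum>n\<in>UNIV. (cmod (ip (phi n) (\<lambda>a. z (a, r))))\<^sup>2)"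
    by (rule sum.swap)
  also have "\<dots> = (\<Sum>r\<in>UNIV. \<Sum>a\<in>UNIV. (cmod (z (a, r)))\<^sup>2)"
    by (simp add: parseval[OF assms])
  also have "\<dots> = (\<Sum>x\<in>UNIV. (cmod (z x))\<^sup>2)"
    by (subst sum.swap) (simp add: sum_pair)
  finally show ?thesis .
qed

lemma norm_tensor:
  fixes psi :: "'a::finite \<Rightarrow> 'a \<Rightarrow> complex"
  assumes "orthonormal_family psi"
  shows "(\<Sum>x\<in>(UNIV::('a \<times> 'r::finite) set). (cmod (tensor_vec (psi n) (basis_vec r) x))\<^sup>2) = 1"
proof -
  have "complex_of_real (\<Sum>x\<in>(UNIV::('a \<times> 'r) set). (cmod (tensor_vec (psi n) (basis_vec r) x))\<^sup>2)
     = ip (tensor_vec (psi n) (basis_vec r)) (tensor_vec (psi n) (basis_vec r))"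
    by (simp add: ip_self)
  also have "\<dots> = ip (psi n) (psi n)"
    by (simp add: ip_tensor tensor_vec_def basis_vec_def)
  also have "\<dots> = 1" using assms by (simp add: ip_def orthonormal_family_def)
  finally show ?thesis by (metis of_real_eq_1_iff)
qed


theorem theorem4:
  fixes USR :: "'s::finite \<times> 'r::finite \<Rightarrow> 's \<times> 'r \<Rightarrow> complex"
    and rho :: "'s \<times> 'm::finite \<Rightarrow> 's \<times> 'm \<Rightarrow> complex"
    and E :: "'r \<Rightarrow> real" and \<beta> :: real
    and Pn Pt :: "'s \<times> 'm \<Rightarrow> real"
    and phi psi :: "'s \<times> 'm \<Rightarrow> 's \<times> 'm \<Rightarrow> complex"
  assumes "\<beta> > 0"
    and "pos_def_density rho"
    and "unitary_op USR"
    and "spectral_decomp rho Pn phi"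
    and "spectral_decomp (final_state USR \<beta> E rho) Pt psi"
  shows "(\<Sum>\<gamma>\<in>{\<gamma>. PF USR \<beta> E Pn phi psi \<gamma> > 0}.
            PF USR \<beta> E Pn phi psi \<gamma> * exp_neg_sigma \<beta> E Pn Pt \<gamma>) = 1"
proof -
  note pd = assms(2) and sp1 = assms(4) and sp2 = assms(5)
  define L where "L = (lift_U USR :: ('s \<times> 'm) \<times> 'r \<Rightarrow> _)"
  define La where "La = Defs.adjoint L"
  define K where "K = kron rho (thermal_state \<beta> E)"
  define M where "M = mmult (mmult L K) La"
  have fin: "final_state USR \<beta> E rho = ptrace2 M"
    by (simp add: final_state_def M_def L_def K_def La_def)
  have hU1: "mmult La L = idop" and hU2: "mmult L La = idop"
    using assms(3) lift_unitary1 lift_unitary2 unfolding unitary_op_def L_def La_def by blast+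
  have on1: "orthonormal_family phi" and on2: "orthonormal_family psi"
    using sp1 sp2 by (simp_all add: spectral_decomp_def)
  have rho_psd: "Re (qform rho w) \<ge> 0" for w
  proof (cases "w = (\<lambda>_. 0)")
    case True then show ?thesis by (simp add: qform_def)
  next
    case False then show ?thesis using pd unfolding pos_def_density_def
      by (meson less_imp_le)
  qed
  have Pn_pos: "Pn n > 0" for n
  proof -
    have "phi n \<noteq> (\<lambda>_. 0)"
    proof
      assume "phi n = (\<lambda>_. 0)"
      then have "(\<Sum>i\<in>UNIV. cnj (phi n i) * phi n i) = 0" by simp
      moreover have "(\<Sum>i\<in>UNIV. cnj (phi n i) * phi n i) = 1"
        using on1[unfolded orthonormal_family_def, rule_format, of n n] by simp
      ultimately show False by simp
    qed
    then have "Re (qform rho (phi n)) > 0" using pd unfolding pos_def_density_def by blast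
    then show ?thesis by (simp add: spec_qform[OF sp1])
  qed
  have final_psd: "Re (qform (ptrace2 M) v) \<ge> 0" for v
  proof -
    have "qform (ptrace2 M) v = (\<Sum>r\<in>UNIV. \<Sum>r0\<in>UNIV. complex_of_real (gibbs \<beta> E r0) *
             qform rho (\<lambda>a. mv La (tensor_vec v (basis_vec r)) (a, r0)))"
      by (simp add: ptrace_qform M_def La_def qform_conj K_def kron_qform)
    then have "Re (qform (ptrace2 M) v) = (\<Sum>r\<in>UNIV. \<Sum>r0\<in>UNIV. gibbs \<beta> E r0 *
             Re (qform rho (\<lambda>a. mv La (tensor_vec v (basis_vec r)) (a, r0))))"
      by simp
    also have "\<dots> \<ge> 0"
      by (intro sum_nonneg mult_nonneg_nonneg rho_psd less_imp_le[OF gibbs_pos])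
    finally show ?thesis .
  qed
  have Pt_nn: "Pt n \<ge> 0" for n
    using final_psd[of "psi n"] spec_qform[OF sp2, of n] fin by simp
  have sumPt: "(\<Sum>n\<in>UNIV. Pt n) = 1"
  proof -
    have "complex_of_real (\<Sum>n\<in>UNIV. Pt n) = trace_op (ptrace2 M)"
      using spec_trace[OF sp2] fin by simp
    also have "\<dots> = trace_op K"
      by (simp add: trace_ptrace M_def La_def trace_conj hU1[unfolded La_def])
    also have "\<dots> = 1"
      using pd by (simp add: K_def kron_trace gibbs_sum pos_def_density_def)
    finally show ?thesis by (metis of_real_eq_1_iff)
  qed
  define T where "T \<gamma> = (case \<gamma> of (n, r, n', r') \<Rightarrow>
      (cmod (mat_elem L (tensor_vec (psi n') (basis_vec r')) (tensor_vec (phi n) (basis_vec r))))\<^sup>2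
      * Pt n' * gibbs \<beta> E r')" for \<gamma>
  have PF_eq: "PF USR \<beta> E Pn phi psi \<gamma> = (case \<gamma> of (n, r, n', r') \<Rightarrow>
      (cmod (mat_elem L (tensor_vec (psi n') (basis_vec r')) (tensor_vec (phi n) (basis_vec r))))\<^sup>2
      * Pn n * gibbs \<beta> E r)" for \<gamma>
    by (simp add: PF_def L_def)
  have stepA: "PF USR \<beta> E Pn phi psi \<gamma> * exp_neg_sigma \<beta> E Pn Pt \<gamma> = T \<gamma>" for \<gamma>
  proof -
    obtain n r n' r' where g: "\<gamma> = (n, r, n', r')" by (metis prod.collapse)
    define c where "c = (cmod (mat_elem L (tensor_vec (psi n') (basis_vec r')) (tensor_vec (phi n) (basis_vec r))))\<^sup>2"
    show ?thesis
    proof (cases "Pt n' = 0")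
      case True then show ?thesis by (simp add: g T_def exp_neg_sigma_def)
    next
      case False
      then have pt: "Pt n' > 0" using Pt_nn[of n'] by simp
      have "PF USR \<beta> E Pn phi psi \<gamma> * exp_neg_sigma \<beta> E Pn Pt \<gamma>
          = c * (Pn n * (exp (- \<beta> * E r) / (\<Sum>s\<in>UNIV. exp (- \<beta> * E s))) *
              exp (- (- ln (Pt n') + ln (Pn n) + \<beta> * (E r' - E r))))"
        using False by (simp add: g PF_eq c_def exp_neg_sigma_def sigma_SM_def gibbs_def mult.assoc)
      also have "\<dots> = c * (Pt n' * (exp (- \<beta> * E r') / (\<Sum>s\<in>UNIV. exp (- \<beta> * E s))))"
        by (simp only: exp_aux[OF pt Pn_pos])
      also have "\<dots> = T \<gamma>" by (simp add: g T_def c_def gibbs_def mult.assoc)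
      finally show ?thesis .
    qed
  qed
  have stepB: "T \<gamma> = 0" if "\<not> PF USR \<beta> E Pn phi psi \<gamma> > 0" for \<gamma>
  proof -
    obtain n r n' r' where g: "\<gamma> = (n, r, n', r')" by (metis prod.collapse)
    have "(cmod (mat_elem L (tensor_vec (psi n') (basis_vec r')) (tensor_vec (phi n) (basis_vec r))))\<^sup>2 = 0"
    proof (rule ccontr)
      assume "\<not> ?thesis"
      then have "(cmod (mat_elem L (tensor_vec (psi n') (basis_vec r')) (tensor_vec (phi n) (basis_vec r))))\<^sup>2 > 0"
        by simp
      then have "PF USR \<beta> E Pn phi psi \<gamma> > 0"
        by (simp add: g PF_eq Pn_pos gibbs_pos)
      with that show False by simp
    qed
    then show ?thesis by (simp add: g T_def)
  qed
  have inner: "(\<Sum>q\<in>UNIV. T (fst q, snd q, fst p, snd p)) = Pt (fst p) * gibbs \<beta> E (snd p)" for p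
  proof -
    obtain n' r' where p: "p = (n', r')" by (metis prod.collapse)
    define w where "w = tensor_vec (psi n') (basis_vec r')"
    have me: "cmod (mat_elem L w v) = cmod (ip v (mv La w))" for v
      by (metis mat_elem_ip ip_adj La_def ip_cnj complex_mod_cnj)
    have "(\<Sum>q\<in>UNIV. T (fst q, snd q, fst p, snd p))
        = (\<Sum>q\<in>UNIV. (cmod (ip (tensor_vec (phi (fst q)) (basis_vec (snd q))) (mv La w)))\<^sup>2) * (Pt n' * gibbs \<beta> E r')"
      by (simp add: T_def p me w_def[symmetric] sum_distrib_right mult.assoc split_def)
    also have "\<dots> = (\<Sum>x\<in>UNIV. (cmod (mv La w x))\<^sup>2) * (Pt n' * gibbs \<beta> E r')"
      by (simp add: parseval_pair[OF on1])
    also have "(\<Sum>x\<in>UNIV. (cmod (mv La w x))\<^sup>2) = (\<Sum>x\<in>UNIV. (cmod (w x))\<^sup>2)"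
      using norm_conj[OF hU2[unfolded La_def], of w] by (simp only: ip_self of_real_eq_iff La_def)
    also have "(\<Sum>x\<in>UNIV. (cmod (w x))\<^sup>2) = 1"
      unfolding w_def by (rule norm_tensor[OF on2])
    finally show ?thesis by (simp add: p)
  qed
  have "(\<Sum>\<gamma>\<in>{\<gamma>. PF USR \<beta> E Pn phi psi \<gamma> > 0}.
            PF USR \<beta> E Pn phi psi \<gamma> * exp_neg_sigma \<beta> E Pn Pt \<gamma>)
      = (\<Sum>\<gamma>\<in>{\<gamma>. PF USR \<beta> E Pn phi psi \<gamma> > 0}. T \<gamma>)"
    by (simp add: stepA)
  also have "\<dots> = (\<Sum>\<gamma>\<in>UNIV. T \<gamma>)"
    by (rule sum.mono_neutral_left) (auto intro: stepB)
  also have "\<dots> = (\<Sum>p\<in>UNIV. Pt (fst p) * gibbs \<beta> E (snd p))"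
    unfolding sum_quad inner by (rule refl)
  also have "\<dots> = 1"
    by (subst sum_pair) (simp add: sum_distrib_left[symmetric] gibbs_sum sumPt)
  finally show ?thesis .
qed

end
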